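(* Let $B, C \in \mathbb{Z}$ be such that $x^2 + Bx + C$ is irreducible, and let $\beta$ be a real root of it. (i) If $B \geq 0$ and $C > 0$, then $p_\beta(\alpha) = \infty$ for all $\alpha \in \mathbb{Z}[\beta]$. (ii) If $B > 0$ and $-B - 1 < C < 0$, then $p_\beta(\alpha) \in \{0, 1, \infty\}$ for every $\alpha \in \mathbb{R}$. Moreover, if $\alpha = c_j\beta^j + c_{j-1}\beta^{j-1} + \dots + c_1\beta + c_0$ with all $c_i \in \mathbb{Z}_{\geq 0}$, then $p_\beta(\alpha) = 1$ if and only if $c_i \in \{0, 1, \ldots, -C-1\}$ for every $i$.
   Context: For $\beta, \alpha \in \mathbb{C}$, $p_\beta(\alpha) \in \mathbb{Z}_{\geq 0}\cup\{\infty\}$ is the number of polynomials $f \in \mathbb{Z}_{\geq 0}[x]$ (non-negative integer coefficients) with $f(\beta) = \alpha$. *)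

theory Defs
  imports Complex_Main "HOL-Computational_Algebra.Polynomial" "HOL-Library.Extended_Nat"
begin

definition p_count :: "complex \<Rightarrow> complex \<Rightarrow> enat" where
  "p_count \<beta> \<alpha> =
     (let S = {f :: nat poly. poly (map_poly of_nat f) \<beta> = \<alpha>}
      in if finite S then enat (card S) else \<infinity>)"

end

theory Submission
  imports Defs
begin

lemma mp_nat_add: "map_poly (of_nat :: nat \<Rightarrow> 'a::comm_semiring_1) (p + q) = map_poly of_nat p + map_poly of_nat q"
  by (intro poly_eqI) (simp add: coeff_map_poly)

lemma mp_nat_mult: "map_poly (of_nat :: nat \<Rightarrow> 'a::comm_semiring_1) (p * q) = map_poly of_nat p * map_poly of_nat q"
proof (induction p)
  case (pCons a p)
  then show ?case
    by (simp add: mult_pCons_left mp_nat_add map_poly_smult map_poly_pCons)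
qed simp

lemma mp_int_add: "map_poly (of_int :: int \<Rightarrow> 'a::comm_ring_1) (p + q) = map_poly of_int p + map_poly of_int q"
  by (intro poly_eqI) (simp add: coeff_map_poly)

lemma mp_int_diff: "map_poly (of_int :: int \<Rightarrow> 'a::comm_ring_1) (p - q) = map_poly of_int p - map_poly of_int q"
  by (intro poly_eqI) (simp add: coeff_map_poly)

lemma mp_int_mult: "map_poly (of_int :: int \<Rightarrow> 'a::comm_ring_1) (p * q) = map_poly of_int p * map_poly of_int q"
proof (induction p)
  case (pCons a p)
  then show ?case
    by (simp add: mult_pCons_left mp_int_add map_poly_smult map_poly_pCons)
qed simp

lemma mp_int_nat: "map_poly (of_int :: int \<Rightarrow> 'a::comm_ring_1) (map_poly int p) = map_poly of_nat p"
  by (simp add: map_poly_map_poly o_def)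

lemma poly_nat_cplx: "poly (map_poly of_nat f) (complex_of_real x) = complex_of_real (poly (map_poly of_nat f) x)"
  by (induction f) (simp_all add: map_poly_pCons)

lemma poly_int_cplx: "poly (map_poly of_int f) (complex_of_real x) = complex_of_real (poly (map_poly of_int f) x)"
  by (induction f) (simp_all add: map_poly_pCons)

lemma coeff_m_mult: "coeff ([:C, B, 1:] * q) n =
   C * coeff q n + (if n > 0 then B * coeff q (n - 1) else 0) + (if n > 1 then coeff q (n - 2) else 0)"
  for q :: "int poly"
  by (cases n; cases "n - 1") (auto simp: mult_pCons_left coeff_pCons)

lemma root_not_rat:
  fixes B C :: int and \<beta> :: real
  assumes irr: "irreducible [:C, B, 1:]"
    and root: "\<beta>\<^sup>2 + of_int B * \<beta> + of_int C = 0"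
  shows "\<beta> \<notin> \<rat>"
proof
  assume "\<beta> \<in> \<rat>"
  then obtain a b :: int where b: "b > 0" "coprime a b" "\<beta> = of_int a / of_int b"
    by (rule Rats_cases'[of \<beta>]) auto
  have "real_of_int (a^2 + B*a*b + C*b^2) = (real_of_int b)^2 * (\<beta>\<^sup>2 + of_int B * \<beta> + of_int C)"
  proof -
    have ab: "real_of_int a = \<beta> * of_int b" using b by simp
    show ?thesis by (simp add: ab algebra_simps power2_eq_square)
  qed
  then have e: "a^2 + B*a*b + C*b^2 = 0" using root by (metis of_int_eq_0_iff mult_zero_right)
  then have "b dvd a^2" by (metis dvd_add_times_triv_right_iff dvd_0_right power2_eq_square mult.commute mult.left_commute add.commute dvd_mult2 dvd_triv_left)
  moreover have "coprime (a^2) b" using b(2) by simp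
  ultimately have "is_unit b" by (meson coprime_common_divisor dvd_refl)
  then have "b = 1" using b(1) by auto
  then have ba: "\<beta> = of_int a" using b by simp
  have C: "C = -(a^2) - B*a" using e \<open>b = 1\<close> by (simp add: algebra_simps)
  have "[:C, B, 1:] = [:-a, 1:] * [:a + B, 1:]"
    by (simp add: C algebra_simps power2_eq_square)
  then have "is_unit [:-a, 1:] \<or> is_unit [:a + B, 1:]"
    using irr irreducibleD by blast
  then show False by (auto simp: is_unit_poly_iff)
qed

lemma lin0:
  fixes B C r0 r1 :: int and \<beta> :: real
  assumes irr: "irreducible [:C, B, 1:]"
    and root: "\<beta>\<^sup>2 + of_int B * \<beta> + of_int C = 0"
    and r: "of_int r0 + of_int r1 * \<beta> = 0"
  shows "r0 = 0 \<and> r1 = 0"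
proof -
  have "r1 = 0"
  proof (rule ccontr)
    assume "r1 \<noteq> 0"
    then have "\<beta> = - of_int r0 / of_int r1" using r by (simp add: field_simps)
    then have "\<beta> \<in> \<rat>" by simp
    then show False using root_not_rat[OF irr root] by simp
  qed
  then show ?thesis using r by simp
qed

lemma divides_m:
  fixes B C :: int and \<beta> :: real and d :: "int poly"
  assumes irr: "irreducible [:C, B, 1:]"
    and root: "\<beta>\<^sup>2 + of_int B * \<beta> + of_int C = 0"
    and d: "poly (map_poly of_int d) \<beta> = 0"
  shows "\<exists>s. d = [:C, B, 1:] * s"
proof -
  let ?m = "[:C, B, 1:]"
  obtain q r where qr: "pseudo_divmod d ?m = (q, r)" by (metis surj_pair)
  have m0: "?m \<noteq> 0" by simp
  have dm: "degree ?m = 2" by simp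
  have "smult (coeff ?m (degree ?m) ^ (Suc (degree d) - degree ?m)) d = ?m * q + r"
    by (rule pseudo_divmod(1)[OF m0 qr])
  then have eq: "d = ?m * q + r" by (simp add: dm)
  have rdeg: "r = 0 \<or> degree r < 2" using pseudo_divmod(2)[OF m0 qr] dm by (simp add: numeral_2_eq_2)
  have rr: "r = [:coeff r 0, coeff r 1:]"
  proof (rule poly_eqI)
    fix n show "coeff r n = coeff [:coeff r 0, coeff r 1:] n"
      using rdeg by (cases n; cases "n - 1") (auto simp: coeff_pCons coeff_eq_0)
  qed
  have pm: "poly (map_poly of_int ?m) \<beta> = 0"
    using root by (simp add: map_poly_pCons power2_eq_square algebra_simps)
  have "poly (map_poly of_int r) \<beta> = 0"
  proof -
    have "poly (map_poly of_int d) \<beta> = poly (map_poly of_int ?m) \<beta> * poly (map_poly of_int q) \<beta> + poly (map_poly of_int r) \<beta>"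
      by (simp only: eq mp_int_add mp_int_mult poly_add poly_mult)
    then show ?thesis using d pm by simp
  qed
  then have "of_int (coeff r 0) + of_int (coeff r 1) * \<beta> = 0"
    by (subst (asm) rr) (simp add: map_poly_pCons mult.commute)
  then have "coeff r 0 = 0 \<and> coeff r 1 = 0" by (rule lin0[OF irr root])
  then have "r = 0" using rr by simp
  then show ?thesis using eq by auto
qed

lemma uniq:
  fixes B C :: int and \<beta> :: real and c g :: "nat poly"
  assumes irr: "irreducible [:C, B, 1:]"
    and root: "\<beta>\<^sup>2 + of_int B * \<beta> + of_int C = 0"
    and BC: "B > 0" "- B - 1 < C" "C < 0"
    and cs: "\<forall>i. int (coeff c i) \<le> - C - 1"
    and eqv: "poly (map_poly real c) \<beta> = poly (map_poly real g) \<beta>"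
  shows "c = g"
proof -
  define d where "d = map_poly int c - map_poly int g"
  have cd: "coeff d n = int (coeff c n) - int (coeff g n)" for n
    by (simp add: d_def coeff_map_poly)
  have "poly (map_poly of_int d) \<beta> = 0"
    using eqv by (simp add: d_def mp_int_diff mp_int_nat)
  then obtain s where s: "d = [:C, B, 1:] * s" using divides_m[OF irr root] by blast
  have ds: "coeff d n = C * coeff s n + (if n > 0 then B * coeff s (n - 1) else 0)
      + (if n > 1 then coeff s (n - 2) else 0)" for n
    unfolding s by (rule coeff_m_mult)
  have nonneg: "coeff s n \<ge> 0" for n
  proof (induction n rule: less_induct)
    case (less n)
    have a: "(if n > 0 then B * coeff s (n - 1) else 0) \<ge> 0"
      using less[of "n - 1"] BC by auto
    have b: "(if n > 1 then coeff s (n - 2) else 0) \<ge> 0"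
      using less[of "n - 2"] by auto
    have "coeff d n \<le> - C - 1" using cd cs by (simp add: of_nat_le_iff) (smt (verit) of_nat_0_le_iff)
    then have "C * coeff s n \<le> - C - 1" using ds[of n] a b by linarith
    show ?case
    proof (rule ccontr)
      assume "\<not> 0 \<le> coeff s n"
      then have "coeff s n + 1 \<le> 0" by simp
      then have "C * (coeff s n + 1) \<ge> 0" using BC by (simp add: mult_nonpos_nonpos)
      then show False using \<open>C * coeff s n \<le> - C - 1\<close> by (simp add: algebra_simps)
    qed
  qed
  have "s = 0"
  proof (rule ccontr)
    assume "s \<noteq> 0"
    define N where "N = degree s"
    have sN: "coeff s N > 0" using nonneg[of N] \<open>s \<noteq> 0\<close> N_def
      by (metis leading_coeff_0_iff order_le_less)
    have "coeff s (Suc N) = 0" using N_def by (simp add: coeff_eq_0)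
    then have "coeff d (Suc N) = B * coeff s N + (if Suc N > 1 then coeff s (Suc N - 2) else 0)"
      using ds[of "Suc N"] by simp
    moreover have "(if Suc N > 1 then coeff s (Suc N - 2) else 0) \<ge> 0" using nonneg by simp
    moreover have "B * coeff s N \<ge> B" using sN BC by simp
    moreover have "coeff d (Suc N) \<le> - C - 1" using cd[of "Suc N"] cs[rule_format, of "Suc N"] by simp
    ultimately show False using BC by linarith
  qed
  then have "d = 0" using s by simp
  then have "coeff c n = coeff g n" for n using cd[of n] by simp
  then show ?thesis by (rule poly_eqI)
qed

lemma infinite_rep:
  fixes B C :: int and \<beta> :: real and h :: "nat poly"
  assumes root: "\<beta>\<^sup>2 + of_int B * \<beta> + of_int C = 0"
    and BC: "B + C \<ge> 0" "C \<le> 0"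
    and hk: "int (coeff h k) \<ge> - C"
  shows "infinite {f :: nat poly. poly (map_poly real f) \<beta> = poly (map_poly real h) \<beta>}"
proof -
  let ?m = "[:C, B, 1:]"
  define q :: "nat \<Rightarrow> int poly" where "q t = (\<Sum>j<t. monom 1 (k + j))" for t
  have cq: "coeff (q t) n = (if k \<le> n \<and> n < k + t then 1 else 0)" for t n
    by (induction t) (auto simp: q_def coeff_monom)
  define G where "G t = map_poly int h + ?m * q t" for t
  have cG: "coeff (G t) n = int (coeff h n) + (C * coeff (q t) n + (if n > 0 then B * coeff (q t) (n - 1) else 0)
      + (if n > 1 then coeff (q t) (n - 2) else 0))" for t n
    by (simp only: G_def coeff_add coeff_map_poly coeff_m_mult of_nat_0)
  have Gnn: "coeff (G t) n \<ge> 0" for t n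
  proof (cases "n = k")
    case True
    then show ?thesis using hk BC unfolding cG cq by auto
  next
    case False
    then show ?thesis using BC unfolding cG cq by auto
  qed
  define g where "g t = map_poly nat (G t)" for t
  have gG: "map_poly int (g t) = G t" for t
    by (rule poly_eqI) (simp add: g_def coeff_map_poly Gnn)
  have pm: "poly (map_poly of_int ?m) \<beta> = 0"
    using root by (simp add: map_poly_pCons power2_eq_square algebra_simps)
  have val: "poly (map_poly real (g t)) \<beta> = poly (map_poly real h) \<beta>" for t
  proof -
    have "poly (map_poly real (g t)) \<beta> = poly (map_poly of_int (G t)) \<beta>"
      by (simp only: gG[symmetric] mp_int_nat)
    also have "\<dots> = poly (map_poly of_int (map_poly int h)) \<beta> + poly (map_poly of_int ?m) \<beta> * poly (map_poly of_int (q t)) \<beta>"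
      by (simp only: G_def mp_int_add mp_int_mult poly_add poly_mult)
    finally show ?thesis using pm by (simp add: mp_int_nat)
  qed
  have "inj g"
  proof (rule injI)
    fix s t assume "g s = g t"
    then have "G s = G t" by (metis gG)
    then have "?m * q s = ?m * q t" by (simp add: G_def)
    then have qq: "q s = q t" by (simp del: mult_pCons_left)
    show "s = t"
    proof (rule ccontr)
      assume "s \<noteq> t"
      then have "coeff (q s) (k + min s t) \<noteq> coeff (q t) (k + min s t)"
        by (auto simp: cq min_def)
      then show False using qq by simp
    qed
  qed
  then have "infinite (range g)" by (rule range_inj_infinite)
  moreover have "range g \<subseteq> {f. poly (map_poly real f) \<beta> = poly (map_poly real h) \<beta>}"
    using val by auto
  ultimately show ?thesis using finite_subset by blast
qed

lemma part1:
  fixes B C :: int and \<beta> :: real and g :: "int poly"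
  assumes root: "\<beta>\<^sup>2 + of_int B * \<beta> + of_int C = 0"
    and BC: "B \<ge> 0" "C > 0"
  shows "infinite {f :: nat poly. poly (map_poly real f) \<beta> = poly (map_poly of_int g) \<beta>}"
proof -
  define gp where "gp = map_poly nat g"
  define gn where "gn = map_poly (\<lambda>a. nat (- a)) g"
  define mc :: "nat poly" where "mc = [:nat C - 1, nat B, 1:]"
  define f0 where "f0 = gp + gn * mc"
  have gg: "map_poly real_of_int g = map_poly real gp - map_poly real gn"
    by (rule poly_eqI) (simp add: gp_def gn_def coeff_map_poly)
  have pmc: "poly (map_poly real mc) \<beta> = -1"
  proof -
    have "real (nat C - 1) = of_int C - 1" using BC by (simp add: of_nat_diff)
    then show ?thesis using root BC
      by (simp add: mc_def map_poly_pCons power2_eq_square algebra_simps)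
  qed
  have v0: "poly (map_poly real f0) \<beta> = poly (map_poly of_int g) \<beta>"
  proof -
    have "poly (map_poly real f0) \<beta> = poly (map_poly real gp) \<beta> + poly (map_poly real gn) \<beta> * poly (map_poly real mc) \<beta>"
      by (simp only: f0_def mp_nat_add mp_nat_mult poly_add poly_mult)
    then show ?thesis using pmc gg by simp
  qed
  define mn :: "nat poly" where "mn = [:nat C, nat B, 1:]"
  have pmn: "poly (map_poly real mn) \<beta> = 0"
    using root BC by (simp add: mn_def map_poly_pCons power2_eq_square algebra_simps)
  define f where "f k = f0 + smult k mn" for k
  have val: "poly (map_poly real (f k)) \<beta> = poly (map_poly of_int g) \<beta>" for k
  proof -
    have "poly (map_poly real (f k)) \<beta> = poly (map_poly real f0) \<beta> + real k * poly (map_poly real mn) \<beta>"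
      by (simp add: f_def mp_nat_add map_poly_smult)
    then show ?thesis using v0 pmn by simp
  qed
  have "inj f"
  proof (rule injI)
    fix s t assume "f s = f t"
    then have "coeff (f s) 2 = coeff (f t) 2" by simp
    then show "s = t" by (simp add: f_def mn_def numeral_2_eq_2)
  qed
  then have "infinite (range f)" by (rule range_inj_infinite)
  moreover have "range f \<subseteq> {f. poly (map_poly real f) \<beta> = poly (map_poly of_int g) \<beta>}"
    using val by auto
  ultimately show ?thesis using finite_subset by blast
qed

lemma pc_real: "p_count (complex_of_real \<beta>) (complex_of_real \<alpha>) =
  (let S = {f :: nat poly. poly (map_poly real f) \<beta> = \<alpha>} in if finite S then enat (card S) else \<infinity>)"
  unfolding p_count_def by (simp add: poly_nat_cplx)

theorem proposition8:
  fixes B C :: int and \<beta> :: real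
  assumes irr: "irreducible [:C, B, 1:]"
    and root: "\<beta>\<^sup>2 + of_int B * \<beta> + of_int C = 0"
  shows
    "(B \<ge> 0 \<and> C > 0 \<longrightarrow>
        (\<forall>g :: int poly. p_count (complex_of_real \<beta>)
                              (complex_of_real (poly (map_poly of_int g) \<beta>)) = \<infinity>))
     \<and>
     (B > 0 \<and> - B - 1 < C \<and> C < 0 \<longrightarrow>
        (\<forall>\<alpha> :: real. p_count (complex_of_real \<beta>) (complex_of_real \<alpha>) \<in> {0, 1, \<infinity>})
        \<and> (\<forall>c :: nat poly.
              p_count (complex_of_real \<beta>) (complex_of_real (poly (map_poly of_nat c) \<beta>)) = 1
              \<longleftrightarrow> (\<forall>i. int (coeff c i) \<le> - C - 1)))"
proof (intro conjI impI allI)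
  fix g :: "int poly" assume "0 \<le> B \<and> 0 < C"
  then show "p_count (complex_of_real \<beta>) (complex_of_real (poly (map_poly of_int g) \<beta>)) = \<infinity>"
    using part1[OF root, of g] by (simp add: pc_real Let_def)
next
  fix \<alpha> :: real assume BC: "0 < B \<and> - B - 1 < C \<and> C < 0"
  define S where "S = {f :: nat poly. poly (map_poly real f) \<beta> = \<alpha>}"
  show "p_count (complex_of_real \<beta>) (complex_of_real \<alpha>) \<in> {0, 1, \<infinity>}"
  proof (cases "finite S")
    case True
    have "card S \<le> Suc 0"
    proof (subst card_le_Suc0_iff_eq[OF True], intro ballI)
      fix a b assume a: "a \<in> S" and b: "b \<in> S"
      show "a = b"
      proof (rule ccontr)
        assume ab: "a \<noteq> b"
        have "\<not> (\<forall>i. int (coeff a i) \<le> - C - 1)"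
          using uniq[OF irr root, of a b] a b ab BC by (auto simp: S_def)
        then obtain k where k: "int (coeff a k) \<ge> - C" by (metis linorder_not_le zle_diff1_eq)
        have "infinite {f :: nat poly. poly (map_poly real f) \<beta> = poly (map_poly real a) \<beta>}"
          by (rule infinite_rep[OF root _ _ k]) (use BC in auto)
        then show False using True a by (simp add: S_def)
      qed
    qed
    then have "card S = 0 \<or> card S = 1" by auto
    then show ?thesis using True by (auto simp: pc_real S_def[symmetric] Let_def one_enat_def zero_enat_def)
  next
    case False
    then show ?thesis by (simp add: pc_real S_def[symmetric] Let_def)
  qed
next
  fix c :: "nat poly" assume BC: "0 < B \<and> - B - 1 < C \<and> C < 0"
  define S where "S = {f :: nat poly. poly (map_poly real f) \<beta> = poly (map_poly real c) \<beta>}"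
  show "p_count (complex_of_real \<beta>) (complex_of_real (poly (map_poly of_nat c) \<beta>)) = 1
      \<longleftrightarrow> (\<forall>i. int (coeff c i) \<le> - C - 1)"
  proof
    assume p1: "p_count (complex_of_real \<beta>) (complex_of_real (poly (map_poly of_nat c) \<beta>)) = 1"
    show "\<forall>i. int (coeff c i) \<le> - C - 1"
    proof (rule ccontr)
      assume "\<not> (\<forall>i. int (coeff c i) \<le> - C - 1)"
      then obtain k where k: "int (coeff c k) \<ge> - C" by (metis linorder_not_le zle_diff1_eq)
      have "infinite S" unfolding S_def
        by (rule infinite_rep[OF root _ _ k]) (use BC in auto)
      then show False using p1 by (simp add: pc_real S_def[symmetric] Let_def)
    qed
  next
    assume cs: "\<forall>i. int (coeff c i) \<le> - C - 1"
    have "S = {c}"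
    proof (intro set_eqI iffI)
      fix x assume "x \<in> S"
      then have "poly (map_poly real c) \<beta> = poly (map_poly real x) \<beta>" by (simp add: S_def)
      then have "c = x" using uniq[OF irr root _ _ _ cs] BC by blast
      then show "x \<in> {c}" by simp
    qed (simp add: S_def)
    then show "p_count (complex_of_real \<beta>) (complex_of_real (poly (map_poly of_nat c) \<beta>)) = 1"
      by (simp add: pc_real S_def[symmetric] Let_def one_enat_def)
  qed
qed

end
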